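(* If $G\in\mathcal{G}_{\mathrm{plin}}$, then for some alphabet $\Sigma$ there is an embedding of $G$ into $\llbracket\Sigma^{\mathbb{Z}}\rrbracket$ whose image has linear plook-ahead and in which the cocycle of every group element takes only even values.
   Context: An alphabet is a finite set with at least two elements. $\llbracket\Sigma^{\mathbb{Z}}\rrbracket$ is the group of homeomorphisms $f$ of $\Sigma^{\mathbb{Z}}$ with a continuous cocycle $c:\Sigma^{\mathbb{Z}}\to\mathbb{Z}$ such that $f(x)=\sigma^{c(x)}(x)$, where $\sigma(x)_i=x_{i+1}$. A subgroup $G\le\llbracket\Sigma^{\mathbb{Z}}\rrbracket$ has plook-ahead $\alpha:\mathbb{N}\to\mathbb{N}$ if $\alpha(0)=0$ and for every non-identity $g\in G$ with cocycle $c$ there are $n\ge1$ and a point $x$ with $\sigma^p(x)=x$ for some $1\le p\le 2n+1$ and $|c(x)|+\alpha(|c(x)|)\ge n$. $\alpha$ is linear if $\alpha(n)\le Cn+C$ for some $C\in\mathbb{N}$ and all $n$. $\mathcal{G}_{\mathrm{plin}}$ is the class of groups isomorphic to a subgroup of $\llbracket\Sigma^{\mathbb{Z}}\rrbracket$, for some alphabet $\Sigma$, having linear plook-ahead. *)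

theory Defs
  imports "HOL-Analysis.Analysis" "HOL-Algebra.Bij"
begin

definition alphabet :: "nat set \<Rightarrow> bool" where
  "alphabet S \<longleftrightarrow> finite S \<and> card S \<ge> 2"

text \<open>The full shift: configurations Z -> S, with the product topology
  (the topology of the function space int => nat, nat discrete).\<close>
definition conf :: "nat set \<Rightarrow> (int \<Rightarrow> nat) set" where
  "conf S = {x. \<forall>i. x i \<in> S}"

definition shiftZ :: "int \<Rightarrow> (int \<Rightarrow> nat) \<Rightarrow> (int \<Rightarrow> nat)" where
  "shiftZ k x = (\<lambda>i. x (i + k))"

definition cocycle :: "nat set \<Rightarrow> ((int \<Rightarrow> nat) \<Rightarrow> (int \<Rightarrow> nat)) \<Rightarrow> ((int \<Rightarrow> nat) \<Rightarrow> int) \<Rightarrow> bool" where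
  "cocycle S f c \<longleftrightarrow> continuous_on (conf S) c \<and> (\<forall>x \<in> conf S. f x = shiftZ (c x) x)"

definition tfg :: "nat set \<Rightarrow> ((int \<Rightarrow> nat) \<Rightarrow> (int \<Rightarrow> nat)) set" where
  "tfg S = {f \<in> Bij (conf S). (\<exists>g. homeomorphism (conf S) (conf S) f g) \<and> (\<exists>c. cocycle S f c)}"

definition tfg_grp :: "nat set \<Rightarrow> ((int \<Rightarrow> nat) \<Rightarrow> (int \<Rightarrow> nat)) set \<Rightarrow> ((int \<Rightarrow> nat) \<Rightarrow> (int \<Rightarrow> nat)) monoid" where
  "tfg_grp S H = (BijGroup (conf S))\<lparr>carrier := H\<rparr>"

definition is_tfg_subgroup :: "nat set \<Rightarrow> ((int \<Rightarrow> nat) \<Rightarrow> (int \<Rightarrow> nat)) set \<Rightarrow> bool" where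
  "is_tfg_subgroup S H \<longleftrightarrow> H \<subseteq> tfg S \<and> subgroup H (BijGroup (conf S))"

definition plookahead :: "nat set \<Rightarrow> ((int \<Rightarrow> nat) \<Rightarrow> (int \<Rightarrow> nat)) set \<Rightarrow> (nat \<Rightarrow> nat) \<Rightarrow> bool" where
  "plookahead S H \<alpha> \<longleftrightarrow> \<alpha> 0 = 0 \<and>
     (\<forall>g \<in> H. g \<noteq> \<one>\<^bsub>BijGroup (conf S)\<^esub> \<longrightarrow> (\<forall>c. cocycle S g c \<longrightarrow>
        (\<exists>n::nat. n \<ge> 1 \<and> (\<exists>x \<in> conf S. (\<exists>p::nat. 1 \<le> p \<and> p \<le> 2*n+1 \<and> shiftZ (int p) x = x)
            \<and> nat \<bar>c x\<bar> + \<alpha> (nat \<bar>c x\<bar>) \<ge> n))))"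

definition linear_fun :: "(nat \<Rightarrow> nat) \<Rightarrow> bool" where
  "linear_fun \<alpha> \<longleftrightarrow> (\<exists>C::nat. \<forall>n. \<alpha> n \<le> C*n + C)"

definition linear_plookahead :: "nat set \<Rightarrow> ((int \<Rightarrow> nat) \<Rightarrow> (int \<Rightarrow> nat)) set \<Rightarrow> bool" where
  "linear_plookahead S H \<longleftrightarrow> (\<exists>\<alpha>. linear_fun \<alpha> \<and> plookahead S H \<alpha>)"

definition G_plin :: "('g, 'm) monoid_scheme \<Rightarrow> bool" where
  "G_plin G \<longleftrightarrow> (\<exists>S H. alphabet S \<and> is_tfg_subgroup S H \<and> linear_plookahead S H
      \<and> G \<cong> tfg_grp S H)"

end

theory Submission
  imports Defs
begin


definition agree :: "nat \<Rightarrow> (int\<Rightarrow>nat) \<Rightarrow> (int\<Rightarrow>nat) \<Rightarrow> bool" where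
 "agree N z z' \<longleftrightarrow> (\<forall>i. \<bar>i\<bar> \<le> int N \<longrightarrow> z' i = z i)"

lemma locally_det_imp_cont:
  assumes "\<forall>z\<in>A. \<exists>N. \<forall>z'\<in>A. agree N z z' \<longrightarrow> F z' = F z"
  shows "continuous_on A F"
  unfolding continuous_on_topological
proof (intro ballI allI impI)
  fix z B assume z: "z\<in>A" and B: "open B" "F z \<in> B"
  obtain N where N: "\<forall>z'\<in>A. agree N z z' \<longrightarrow> F z' = F z" using assms z by blast
  let ?U = "{f. \<forall>i\<in>{-int N..int N}. f (id i) \<in> (\<lambda>i. {z i}) i}"
  have "open ?U" by (rule product_topology_basis') (auto simp: open_discrete)
  moreover have "z \<in> ?U" by auto
  moreover have "\<forall>y\<in>A. y \<in> ?U \<longrightarrow> F y \<in> B"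
  proof (intro ballI impI)
    fix y assume "y \<in> A" "y \<in> ?U"
    then have "agree N z y" by (auto simp: agree_def abs_le_iff)
    then show "F y \<in> B" using N B \<open>y \<in> A\<close> by auto
  qed
  ultimately show "\<exists>U. open U \<and> z \<in> U \<and> (\<forall>y\<in>A. y \<in> U \<longrightarrow> F y \<in> B)" by blast
qed

lemma cont_imp_locally_det:
  fixes c :: "(int\<Rightarrow>nat) \<Rightarrow> 'b::discrete_topology"
  assumes "continuous_on A c" "z \<in> A"
  shows "\<exists>N. \<forall>z'\<in>A. agree N z z' \<longrightarrow> c z' = c z"
proof -
  obtain U where U: "open U" "z \<in> U" "\<forall>y\<in>A. y \<in> U \<longrightarrow> c y \<in> {c z}"
    using assms unfolding continuous_on_topological by (meson open_discrete singletonI)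
  have "openin (product_topology (\<lambda>i. euclidean) UNIV) U" using U(1) by (simp add: open_fun_def)
  from product_topology_open_contains_basis[OF this U(2)]
  obtain X where X: "z \<in> (\<Pi>\<^sub>E i\<in>UNIV. X i)" "finite {i. X i \<noteq> UNIV}" "(\<Pi>\<^sub>E i\<in>UNIV. X i) \<subseteq> U"
    by auto
  define F where "F = {i. X i \<noteq> UNIV}"
  define N where "N = Max (insert 0 ((\<lambda>i. nat \<bar>i\<bar>) ` F))"
  have fin: "finite F" using X(2) F_def by simp
  have Nb: "i \<in> F \<Longrightarrow> \<bar>i\<bar> \<le> int N" for i
  proof -
    assume "i \<in> F"
    then have "nat \<bar>i\<bar> \<le> N" unfolding N_def using fin by (intro Max_ge) auto
    then show ?thesis by simp
  qed
  show ?thesis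
  proof (intro exI ballI impI)
    fix z' assume z': "z' \<in> A" "agree N z z'"
    have "z' \<in> (\<Pi>\<^sub>E i\<in>UNIV. X i)"
    proof (simp add: PiE_iff, intro allI)
      fix i show "z' i \<in> X i"
      proof (cases "i \<in> F")
        case True then show ?thesis using Nb[OF True] z'(2) X(1) by (auto simp: agree_def PiE_iff)
      next
        case False then show ?thesis by (simp add: F_def)
      qed
    qed
    then show "c z' = c z" using X(3) U(3) z'(1) by auto
  qed
qed

lemma two_elems: assumes "alphabet S" obtains a b where "a \<in> S" "b \<in> S" "a \<noteq> b"
proof -
  have "card S \<ge> 2" "finite S" using assms by (auto simp add: alphabet_def)
  then have "\<not> (\<forall>a\<in>S. \<forall>b\<in>S. a = b)" using card_le_Suc0_iff_eq[of S] by auto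
  then obtain a b where "a \<in> S" "b \<in> S" "a \<noteq> b" by blast
  then show ?thesis using that by blast
qed

lemma cocycle_unique:
  assumes S: "alphabet S" and c: "cocycle S f c" and d: "cocycle S f d" and x: "x \<in> conf S"
  shows "c x = d x"
proof (rule ccontr)
  assume ne: "c x \<noteq> d x"
  define k where "k = c x - d x"
  obtain N1 where N1: "\<forall>z'\<in>conf S. agree N1 x z' \<longrightarrow> c z' = c x"
    using cont_imp_locally_det[of "conf S" c x] c x by (auto simp: cocycle_def)
  obtain N2 where N2: "\<forall>z'\<in>conf S. agree N2 x z' \<longrightarrow> d z' = d x"
    using cont_imp_locally_det[of "conf S" d x] d x by (auto simp: cocycle_def)
  obtain a b where ab: "a \<in> S" "b \<in> S" "a \<noteq> b" using two_elems[OF S] by blast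
  define N where "N = max N1 N2"
  define M where "M = int N + \<bar>k\<bar> + 1"
  define z where "z = (\<lambda>i. if \<bar>i\<bar> \<le> int N then x i else if i = M then a else b)"
  have zS: "z \<in> conf S" using x ab by (auto simp: conf_def z_def)
  have "agree N1 x z" "agree N2 x z" by (auto simp: agree_def z_def N_def)
  then have cz: "c z = c x" and dz: "d z = d x" using N1 N2 zS by auto
  have "shiftZ (c z) z = shiftZ (d z) z" using c d zS by (simp add: cocycle_def)
  then have "shiftZ (c z) z (M - d x) = shiftZ (d z) z (M - d x)" by simp
  then have "z (M + k) = z M" by (simp add: shiftZ_def cz dz k_def algebra_simps)
  moreover have "k \<noteq> 0" using ne k_def by simp
  ultimately show False using ab(3) by (auto simp: z_def M_def split: if_splits)
qed



definition ev :: "(int\<Rightarrow>nat) \<Rightarrow> (int\<Rightarrow>nat)" where "ev z = (\<lambda>i. z (2*i))"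
definition cc :: "nat set \<Rightarrow> ((int \<Rightarrow> nat) \<Rightarrow> (int \<Rightarrow> nat)) \<Rightarrow> ((int \<Rightarrow> nat) \<Rightarrow> int)" where
  "cc S f = (SOME c. cocycle S f c)"
definition Phi :: "nat set \<Rightarrow> ((int \<Rightarrow> nat) \<Rightarrow> (int \<Rightarrow> nat)) \<Rightarrow> ((int \<Rightarrow> nat) \<Rightarrow> (int \<Rightarrow> nat))" where
  "Phi S f = (\<lambda>z\<in>conf S. shiftZ (2 * cc S f (ev z)) z)"

lemma shiftZ_conf: "x \<in> conf S \<Longrightarrow> shiftZ k x \<in> conf S"
  by (simp add: conf_def shiftZ_def)
lemma ev_conf: "z \<in> conf S \<Longrightarrow> ev z \<in> conf S"
  by (simp add: conf_def ev_def)
lemma ev_shift: "ev (shiftZ (2*k) z) = shiftZ k (ev z)"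
  by (simp add: ev_def shiftZ_def algebra_simps)
lemma shiftZ_add: "shiftZ a (shiftZ b z) = shiftZ (a+b) z"
  by (simp add: shiftZ_def algebra_simps)
lemma shiftZ_0[simp]: "shiftZ 0 z = z"
  by (simp add: shiftZ_def)

lemma cont_ev: "continuous_on A ev"
  unfolding ev_def
  by (intro continuous_on_coordinatewise_then_product continuous_on_subset[OF continuous_on_product_coordinates]) auto

lemma tfg_cc: "f \<in> tfg S \<Longrightarrow> cocycle S f (cc S f)"
  unfolding tfg_def cc_def by (metis (mono_tags, lifting) mem_Collect_eq someI)

lemma tfg_cont: "f \<in> tfg S \<Longrightarrow> continuous_on (conf S) f"
  unfolding tfg_def homeomorphism_def by auto

lemma tfg_maps: "f \<in> tfg S \<Longrightarrow> x \<in> conf S \<Longrightarrow> f x \<in> conf S"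
  unfolding tfg_def Bij_def bij_betw_def by auto

lemma cc_unique: "alphabet S \<Longrightarrow> cocycle S f c \<Longrightarrow> x \<in> conf S \<Longrightarrow> cc S f x = c x"
  unfolding cc_def by (rule cocycle_unique) (auto intro: someI[where P="cocycle S f"])

lemma cocycle_compose:
  assumes "f \<in> tfg S" "g \<in> tfg S"
  shows "cocycle S (compose (conf S) f g) (\<lambda>x. cc S f (g x) + cc S g x)"
  unfolding cocycle_def
proof
  have "continuous_on (conf S) (\<lambda>x. cc S f (g x))"
    using tfg_cc[OF assms(1)] tfg_cont[OF assms(2)] tfg_maps[OF assms(2)]
    by (intro continuous_on_compose2[of "conf S" "cc S f" "conf S" g]) (auto simp: cocycle_def)
  then show "continuous_on (conf S) (\<lambda>x. cc S f (g x) + cc S g x)"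
    using tfg_cc[OF assms(2)] by (intro continuous_on_add) (auto simp: cocycle_def)
  show "\<forall>x\<in>conf S. compose (conf S) f g x = shiftZ (cc S f (g x) + cc S g x) x"
    using tfg_cc[OF assms(1)] tfg_cc[OF assms(2)] tfg_maps[OF assms(2)]
    by (auto simp: compose_def cocycle_def shiftZ_add)
qed

lemma Phi_cocycle:
  assumes "f \<in> tfg S"
  shows "cocycle S (Phi S f) (\<lambda>z. 2 * cc S f (ev z))"
  unfolding cocycle_def
proof
  show "continuous_on (conf S) (\<lambda>z. 2 * cc S f (ev z))"
  proof -
    have "continuous_on (conf S) (\<lambda>z. cc S f (ev z))"
      using tfg_cc[OF assms] ev_conf
      by (intro continuous_on_compose2[of "conf S" "cc S f" "conf S" ev] cont_ev) (auto simp: cocycle_def)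
    then show ?thesis
      by (intro continuous_on_compose2[of UNIV "\<lambda>k::int. 2*k" "conf S" "\<lambda>z. cc S f (ev z)"]) auto
  qed
  show "\<forall>x\<in>conf S. Phi S f x = shiftZ (2 * cc S f (ev x)) x" by (simp add: Phi_def)
qed

lemma Phi_maps: "z \<in> conf S \<Longrightarrow> Phi S f z \<in> conf S"
  by (simp add: Phi_def shiftZ_conf)

lemma Phi_comp:
  assumes S: "alphabet S" and "f \<in> tfg S" "g \<in> tfg S" and z: "z \<in> conf S"
  shows "Phi S f (Phi S g z) = Phi S (compose (conf S) f g) z"
proof -
  define cg where "cg = cc S g (ev z)"
  have evz: "ev z \<in> conf S" using z by (rule ev_conf)
  have g1: "g (ev z) = shiftZ cg (ev z)" using tfg_cc[OF assms(3)] evz by (simp add: cocycle_def cg_def)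
  have e: "ev (Phi S g z) = g (ev z)" using z g1 by (simp add: Phi_def cg_def ev_shift)
  have "Phi S f (Phi S g z) = shiftZ (2 * cc S f (g (ev z))) (shiftZ (2*cg) z)"
    using z Phi_maps[OF z] e by (simp add: Phi_def cg_def)
  also have "\<dots> = shiftZ (2 * (cc S f (g (ev z)) + cg)) z" by (simp add: shiftZ_add algebra_simps)
  also have "cc S f (g (ev z)) + cg = cc S (compose (conf S) f g) (ev z)"
    using cc_unique[OF S cocycle_compose[OF assms(2,3)] evz] cg_def by simp
  finally show ?thesis using z by (simp add: Phi_def)
qed

lemma Phi_one:
  assumes S: "alphabet S"
  shows "Phi S (\<lambda>x\<in>conf S. x) = (\<lambda>x\<in>conf S. x)"
proof -
  have "cocycle S (\<lambda>x\<in>conf S. x) (\<lambda>_. 0)" by (simp add: cocycle_def)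
  then have "\<And>z. z \<in> conf S \<Longrightarrow> cc S (\<lambda>x\<in>conf S. x) (ev z) = 0"
    using cc_unique[OF S] ev_conf by blast
  then show ?thesis unfolding Phi_def by (intro restrict_ext) simp
qed

lemma Phi_cont:
  assumes "f \<in> tfg S"
  shows "continuous_on (conf S) (Phi S f)"
proof -
  define c' where "c' = (\<lambda>z. 2 * cc S f (ev z))"
  have cc': "continuous_on (conf S) c'" using Phi_cocycle[OF assms] by (simp add: cocycle_def c'_def)
  have "continuous_on (conf S) (\<lambda>z. shiftZ (c' z) z)"
  proof (intro continuous_on_coordinatewise_then_product locally_det_imp_cont ballI)
    fix i z assume z: "z \<in> conf S"
    obtain N0 where N0: "\<forall>z'\<in>conf S. agree N0 z z' \<longrightarrow> c' z' = c' z"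
      using cont_imp_locally_det[OF cc' z] by blast
    show "\<exists>N. \<forall>z'\<in>conf S. agree N z z' \<longrightarrow> shiftZ (c' z') z' i = shiftZ (c' z) z i"
    proof (intro exI[of _ "max N0 (nat \<bar>i + c' z\<bar>)"] ballI impI)
      fix z' assume "z' \<in> conf S" "agree (max N0 (nat \<bar>i + c' z\<bar>)) z z'"
      moreover then have "agree N0 z z'" by (auto simp: agree_def)
      ultimately show "shiftZ (c' z') z' i = shiftZ (c' z) z i"
        using N0 by (auto simp: agree_def shiftZ_def)
    qed
  qed
  then show ?thesis by (rule continuous_on_cong[THEN iffD1, rotated 2]) (auto simp: Phi_def c'_def)
qed

lemma Phi_inj:
  assumes "f \<in> tfg S" "g \<in> tfg S" "Phi S f = Phi S g"
  shows "f = g"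
proof (rule extensionalityI[of _ "conf S"])
  show "f \<in> extensional (conf S)" "g \<in> extensional (conf S)"
    using assms by (auto simp: tfg_def Bij_def)
  fix a assume a: "a \<in> conf S"
  define z where "z = (\<lambda>i::int. a (i div 2))"
  have z: "z \<in> conf S" using a by (auto simp: conf_def z_def)
  have evz: "ev z = a" by (simp add: ev_def z_def)
  have "Phi S f z = Phi S g z" using assms by simp
  then have "ev (Phi S f z) = ev (Phi S g z)" by simp
  then have "shiftZ (cc S f a) a = shiftZ (cc S g a) a" using z by (simp add: Phi_def ev_shift evz)
  then show "f a = g a" using tfg_cc[OF assms(1)] tfg_cc[OF assms(2)] a by (simp add: cocycle_def)
qed



lemma Phi_hom_eq:
  assumes S: "alphabet S" and "f \<in> tfg S" "g \<in> tfg S"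
  shows "Phi S (compose (conf S) f g) = compose (conf S) (Phi S f) (Phi S g)"
proof (rule extensionalityI[of _ "conf S"])
  show "Phi S (compose (conf S) f g) \<in> extensional (conf S)" by (simp add: Phi_def)
  show "compose (conf S) (Phi S f) (Phi S g) \<in> extensional (conf S)" by (simp add: compose_def)
  fix z assume "z \<in> conf S"
  then show "Phi S (compose (conf S) f g) z = compose (conf S) (Phi S f) (Phi S g) z"
    using Phi_comp[OF assms] by (simp add: compose_def)
qed

lemma Phi_inv:
  assumes S: "alphabet S" and "f \<in> tfg S" "g \<in> tfg S" "compose (conf S) f g = (\<lambda>x\<in>conf S. x)"
    and z: "z \<in> conf S"
  shows "Phi S f (Phi S g z) = z"
  using Phi_comp[OF S assms(2,3) z] assms(4) Phi_one[OF S] z by simp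

lemma Phi_tfg:
  assumes S: "alphabet S" and f: "f \<in> tfg S" and g: "g \<in> tfg S"
    and fg: "compose (conf S) f g = (\<lambda>x\<in>conf S. x)" and gf: "compose (conf S) g f = (\<lambda>x\<in>conf S. x)"
  shows "Phi S f \<in> tfg S"
proof -
  have i1: "\<And>z. z \<in> conf S \<Longrightarrow> Phi S f (Phi S g z) = z" using Phi_inv[OF S f g fg] .
  have i2: "\<And>z. z \<in> conf S \<Longrightarrow> Phi S g (Phi S f z) = z" using Phi_inv[OF S g f gf] .
  have "bij_betw (Phi S f) (conf S) (conf S)"
  proof (rule bij_betw_byWitness[where f'="Phi S g"])
    show "\<forall>a\<in>conf S. Phi S g (Phi S f a) = a" using i2 by blast
    show "\<forall>a'\<in>conf S. Phi S f (Phi S g a') = a'" using i1 by blast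
    show "Phi S f ` conf S \<subseteq> conf S" using Phi_maps by blast
    show "Phi S g ` conf S \<subseteq> conf S" using Phi_maps by blast
  qed
  then have "Phi S f \<in> Bij (conf S)" by (simp add: Bij_def Phi_def)
  moreover have "homeomorphism (conf S) (conf S) (Phi S f) (Phi S g)"
  proof (rule homeomorphismI)
    show "continuous_on (conf S) (Phi S f)" by (rule Phi_cont[OF f])
    show "continuous_on (conf S) (Phi S g)" by (rule Phi_cont[OF g])
    show "Phi S f ` conf S \<subseteq> conf S" using Phi_maps by blast
    show "Phi S g ` conf S \<subseteq> conf S" using Phi_maps by blast
  qed (use i1 i2 in blast)+
  moreover have "cocycle S (Phi S f) (\<lambda>z. 2 * cc S f (ev z))" by (rule Phi_cocycle[OF f])
  ultimately show ?thesis unfolding tfg_def by blast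
qed

lemma H_facts:
  assumes H: "is_tfg_subgroup S H" and f: "f \<in> H"
  shows "\<exists>g\<in>H. compose (conf S) f g = (\<lambda>x\<in>conf S. x) \<and> compose (conf S) g f = (\<lambda>x\<in>conf S. x)"
proof -
  have grp: "group (BijGroup (conf S))" by (rule group_BijGroup)
  have sg: "subgroup H (BijGroup (conf S))" using H by (simp add: is_tfg_subgroup_def)
  have fc: "f \<in> carrier (BijGroup (conf S))" using sg f subgroup.subset by blast
  define g where "g = inv\<^bsub>BijGroup (conf S)\<^esub> f"
  have gH: "g \<in> H" using subgroup.m_inv_closed[OF sg f] g_def by simp
  have gc: "g \<in> carrier (BijGroup (conf S))" using group.inv_closed[OF grp fc] g_def by simp
  have 1: "f \<otimes>\<^bsub>BijGroup (conf S)\<^esub> g = \<one>\<^bsub>BijGroup (conf S)\<^esub>" using group.r_inv[OF grp fc] g_def by simp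
  have 2: "g \<otimes>\<^bsub>BijGroup (conf S)\<^esub> f = \<one>\<^bsub>BijGroup (conf S)\<^esub>" using group.l_inv[OF grp fc] g_def by simp
  have m: "\<And>a b. a \<in> carrier (BijGroup (conf S)) \<Longrightarrow> b \<in> carrier (BijGroup (conf S)) \<Longrightarrow>
     a \<otimes>\<^bsub>BijGroup (conf S)\<^esub> b = compose (conf S) a b"
    by (simp add: BijGroup_def)
  have o: "\<one>\<^bsub>BijGroup (conf S)\<^esub> = (\<lambda>x\<in>conf S. x)" by (simp add: BijGroup_def)
  show ?thesis using gH 1 2 m[OF fc gc] m[OF gc fc] o by auto
qed


lemma Phi_tfg_H:
  assumes S: "alphabet S" and H: "is_tfg_subgroup S H" and f: "f \<in> H"
  shows "Phi S f \<in> tfg S"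
proof -
  obtain g where g: "g \<in> H" "compose (conf S) f g = (\<lambda>x\<in>conf S. x)" "compose (conf S) g f = (\<lambda>x\<in>conf S. x)"
    using H_facts[OF H f] by blast
  have Ht: "H \<subseteq> tfg S" using H by (simp add: is_tfg_subgroup_def)
  show ?thesis using Phi_tfg[OF S _ _ g(2) g(3)] Ht f g(1) by blast
qed

lemma Phi_Bij: "Phi S f \<in> tfg S \<Longrightarrow> Phi S f \<in> Bij (conf S)"
  by (simp add: tfg_def)

lemma linear_alpha2:
  assumes "linear_fun \<alpha>"
  shows "linear_fun (\<lambda>m. if m = 0 then 0 else 2 * \<alpha> (m div 2) + 1)"
proof -
  obtain C where C: "\<And>n. \<alpha> n \<le> C*n + C" using assms by (auto simp: linear_fun_def)
  have "(if m = 0 then 0 else 2 * \<alpha> (m div 2) + 1) \<le> (2*C+1)*m + (2*C+1)" for m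
  proof -
    have "2 * \<alpha> (m div 2) \<le> 2 * (C * (m div 2) + C)" by (rule mult_le_mono2[OF C])
    also have "\<dots> = C * (2 * (m div 2)) + 2*C" by (simp add: algebra_simps)
    also have "\<dots> \<le> C * m + 2*C" by (simp add: mult_le_mono2)
    finally show ?thesis by (auto simp: algebra_simps)
  qed
  then show ?thesis unfolding linear_fun_def by blast
qed



lemma plook_step:
  assumes S: "alphabet S" and f: "f \<in> tfg S" and d: "cocycle S (Phi S f) d"
    and a0: "\<alpha> 0 = 0"
    and n0: "n0 \<ge> 1" and x: "x \<in> conf S" and p0: "1 \<le> p0" "p0 \<le> 2*n0+1" "shiftZ (int p0) x = x"
    and ge: "nat \<bar>cc S f x\<bar> + \<alpha> (nat \<bar>cc S f x\<bar>) \<ge> n0"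
  shows "\<exists>n::nat. n \<ge> 1 \<and> (\<exists>z \<in> conf S. (\<exists>p::nat. 1 \<le> p \<and> p \<le> 2*n+1 \<and> shiftZ (int p) z = z)
            \<and> nat \<bar>d z\<bar> + (\<lambda>m. if m = 0 then 0 else 2 * \<alpha> (m div 2) + 1) (nat \<bar>d z\<bar>) \<ge> n)"
proof -
  define z where "z = (\<lambda>i::int. x (i div 2))"
  have z: "z \<in> conf S" using x by (auto simp: conf_def z_def)
  have evz: "ev z = x" by (simp add: ev_def z_def)
  have per: "shiftZ (int (2*p0)) z = z"
  proof
    fix i
    have "shiftZ (int (2*p0)) z i = x (i div 2 + int p0)" by (simp add: shiftZ_def z_def add.commute)
    also have "\<dots> = shiftZ (int p0) x (i div 2)" by (simp add: shiftZ_def)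
    also have "\<dots> = z i" using p0(3) by (simp add: z_def)
    finally show "shiftZ (int (2*p0)) z i = z i" .
  qed
  have dz: "d z = 2 * cc S f x"
    using cc_unique[OF S Phi_cocycle[OF f] z] cc_unique[OF S d z] evz by simp
  define m where "m = nat \<bar>cc S f x\<bar>"
  have m0: "m \<noteq> 0" using ge a0 n0 m_def by (cases "m = 0") auto
  have nd: "nat \<bar>d z\<bar> = 2*m" using dz m_def by (simp add: abs_mult nat_mult_distrib)
  have A: "\<exists>p::nat. 1 \<le> p \<and> p \<le> 2*(2*n0+1)+1 \<and> shiftZ (int p) z = z"
    using per p0 by (intro exI[of _ "2*p0"]) auto
  have B: "2*n0+1 \<le> nat \<bar>d z\<bar> + (if nat \<bar>d z\<bar> = 0 then 0 else 2 * \<alpha> (nat \<bar>d z\<bar> div 2) + 1)"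
    using nd m0 ge m_def by simp
  have C: "(2*n0+1::nat) \<ge> 1" by simp
  show ?thesis using A B C z by blast
qed

theorem mainTheorem5:
  fixes G :: "('g, 'm) monoid_scheme"
  assumes "G_plin G"
  shows "\<exists>S \<phi>. alphabet S \<and> \<phi> \<in> hom G (BijGroup (conf S)) \<and> inj_on \<phi> (carrier G)
     \<and> \<phi> ` carrier G \<subseteq> tfg S \<and> linear_plookahead S (\<phi> ` carrier G)
     \<and> (\<forall>g \<in> carrier G. \<forall>c. cocycle S (\<phi> g) c \<longrightarrow> (\<forall>x \<in> conf S. even (c x)))"
proof -
  obtain S H where S: "alphabet S" and H: "is_tfg_subgroup S H" and lp: "linear_plookahead S H"
    and iso: "G \<cong> tfg_grp S H" using assms by (auto simp: G_plin_def)
  obtain \<psi> where \<psi>: "\<psi> \<in> iso G (tfg_grp S H)" using iso by (auto simp: is_iso_def)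
  have cT: "carrier (tfg_grp S H) = H" by (simp add: tfg_grp_def)
  have mT: "\<And>a b. a \<otimes>\<^bsub>tfg_grp S H\<^esub> b = a \<otimes>\<^bsub>BijGroup (conf S)\<^esub> b" by (simp add: tfg_grp_def)
  have hom: "\<psi> \<in> hom G (tfg_grp S H)" and img: "\<psi> ` carrier G = H" and inj: "inj_on \<psi> (carrier G)"
    using \<psi> cT by (auto simp: iso_iff)
  have Ht: "H \<subseteq> tfg S" using H by (simp add: is_tfg_subgroup_def)
  have cB: "carrier (BijGroup (conf S)) = Bij (conf S)" by (simp add: BijGroup_def)
  have mB: "\<And>a b. a \<in> Bij (conf S) \<Longrightarrow> b \<in> Bij (conf S) \<Longrightarrow> a \<otimes>\<^bsub>BijGroup (conf S)\<^esub> b = compose (conf S) a b"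
    by (simp add: BijGroup_def)
  have oB: "\<one>\<^bsub>BijGroup (conf S)\<^esub> = (\<lambda>x\<in>conf S. x)" by (simp add: BijGroup_def)
  have HB: "H \<subseteq> Bij (conf S)" using Ht by (auto simp: tfg_def)
  have PT: "\<And>f. f \<in> H \<Longrightarrow> Phi S f \<in> tfg S" using Phi_tfg_H[OF S H] .
  have \<psi>H: "\<And>x. x \<in> carrier G \<Longrightarrow> \<psi> x \<in> H" using img by blast
  define \<phi> where "\<phi> = (\<lambda>x. Phi S (\<psi> x))"
  have phom: "\<phi> \<in> hom G (BijGroup (conf S))"
  proof (rule homI)
    fix x assume "x \<in> carrier G"
    then show "\<phi> x \<in> carrier (BijGroup (conf S))" using PT \<psi>H Phi_Bij cB \<phi>_def by simp
  next
    fix x y assume x: "x \<in> carrier G" and y: "y \<in> carrier G"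
    have "\<psi> (x \<otimes>\<^bsub>G\<^esub> y) = \<psi> x \<otimes>\<^bsub>tfg_grp S H\<^esub> \<psi> y" using hom x y by (simp add: hom_mult)
    also have "\<dots> = compose (conf S) (\<psi> x) (\<psi> y)" using mT mB[of "\<psi> x" "\<psi> y"] HB \<psi>H[OF x] \<psi>H[OF y] by auto
    finally have "\<phi> (x \<otimes>\<^bsub>G\<^esub> y) = compose (conf S) (\<phi> x) (\<phi> y)"
      using Phi_hom_eq[OF S] Ht \<psi>H x y \<phi>_def by auto
    then show "\<phi> (x \<otimes>\<^bsub>G\<^esub> y) = \<phi> x \<otimes>\<^bsub>BijGroup (conf S)\<^esub> \<phi> y"
      using mB Phi_Bij PT \<psi>H x y \<phi>_def by simp
  qed
  have pinj: "inj_on \<phi> (carrier G)"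
  proof (rule inj_onI)
    fix x y assume "x \<in> carrier G" "y \<in> carrier G" "\<phi> x = \<phi> y"
    then have "\<psi> x = \<psi> y" using Phi_inj \<psi>H Ht \<phi>_def by blast
    then show "x = y" using inj \<open>x \<in> carrier G\<close> \<open>y \<in> carrier G\<close> by (simp add: inj_on_def)
  qed
  have pimg: "\<phi> ` carrier G = Phi S ` H" using img \<phi>_def by auto
  have psub: "\<phi> ` carrier G \<subseteq> tfg S" using pimg PT by auto
  have peven: "\<forall>g \<in> carrier G. \<forall>c. cocycle S (\<phi> g) c \<longrightarrow> (\<forall>x \<in> conf S. even (c x))"
  proof (intro ballI allI impI)
    fix g c x assume g: "g \<in> carrier G" and c: "cocycle S (\<phi> g) c" and x: "x \<in> conf S"
    have f: "\<psi> g \<in> tfg S" using \<psi>H[OF g] Ht by blast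
    have "c x = 2 * cc S (\<psi> g) (ev x)"
      using cc_unique[OF S Phi_cocycle[OF f] x] cc_unique[OF S c x] \<phi>_def by simp
    then show "even (c x)" by simp
  qed
  obtain \<alpha> where la: "linear_fun \<alpha>" and pa: "plookahead S H \<alpha>" using lp by (auto simp: linear_plookahead_def)
  define \<alpha>' where "\<alpha>' = (\<lambda>m. if m = 0 then 0 else 2 * \<alpha> (m div 2) + 1)"
  have a0: "\<alpha> 0 = 0" using pa by (simp add: plookahead_def)
  have "plookahead S (\<phi> ` carrier G) \<alpha>'"
    unfolding plookahead_def
  proof (intro conjI ballI impI allI)
    show "\<alpha>' 0 = 0" by (simp add: \<alpha>'_def)
    fix g' d assume g': "g' \<in> \<phi> ` carrier G" and ne: "g' \<noteq> \<one>\<^bsub>BijGroup (conf S)\<^esub>" and d: "cocycle S g' d"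
    obtain f where fH: "f \<in> H" and g'f: "g' = Phi S f" using g' pimg by auto
    have ft: "f \<in> tfg S" using fH Ht by blast
    have fne: "f \<noteq> \<one>\<^bsub>BijGroup (conf S)\<^esub>" using ne g'f Phi_one[OF S] oB by auto
    from pa fH fne tfg_cc[OF ft] obtain n0 x p0 where
      n0: "n0 \<ge> 1" and x: "x \<in> conf S" and p0: "1 \<le> p0" "p0 \<le> 2*n0+1" "shiftZ (int p0) x = x"
      and ge: "nat \<bar>cc S f x\<bar> + \<alpha> (nat \<bar>cc S f x\<bar>) \<ge> n0"
      unfolding plookahead_def by blast
    show "\<exists>n::nat. n \<ge> 1 \<and> (\<exists>z \<in> conf S. (\<exists>p::nat. 1 \<le> p \<and> p \<le> 2*n+1 \<and> shiftZ (int p) z = z)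
            \<and> nat \<bar>d z\<bar> + \<alpha>' (nat \<bar>d z\<bar>) \<ge> n)"
      unfolding \<alpha>'_def using plook_step[OF S ft _ a0 n0 x p0 ge] d g'f by blast
  qed
  moreover have "linear_fun \<alpha>'" unfolding \<alpha>'_def by (rule linear_alpha2[OF la])
  ultimately have "linear_plookahead S (\<phi> ` carrier G)" by (auto simp: linear_plookahead_def)
  then show ?thesis using S phom pinj psub peven by blast
qed


end
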